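(* Let $0<u<1$ and let ${\mathcal Q} = u\,{\rm Re}\,{\mathcal Q_1} + (1-u)\,{\rm Re}\,{\mathcal Q_2} + {\rm Re}\,{\mathcal Q_3}$ be a negative definite matrix, where ${\mathcal Q_1},{\mathcal Q_2},{\mathcal Q_3}$ are the $6\times 6$ matrices defined in the context below, and let ${\bf b} = (0,1,0,0,0,1)^\top$. Then when ${\mathcal Q}$ is full rank for all $0<u<1$, the Holevo Cramér–Rao bound (with identity weight matrix) satisfies $\mathscr{L}_u \le C_{\mathsf{H}} \le \mathscr{U}_u$, where \[ \mathscr{L}_u = -\frac{1}{4} {\bf b}^\top {\mathcal Q}^{-1} {\bf b},\qquad \mathscr{U}_u = \frac{1}{4} \max\left\{ {\bf b}^{\top}{\mathcal Q}^{-1} {\mathcal Q_1} {\mathcal Q}^{-1} {\bf b},\ {\bf b}^{\top} {\mathcal Q}^{-1} {\mathcal Q_2} {\mathcal Q}^{-1} {\bf b} \right\}, \] with equality on both sides attained at the stationary point of the lower bound with respect to $u$, i.e. when $\frac{d}{du}({\bf b}^\top {\mathcal Q}^{-1} {\bf b}) = ({\bf b}^\top {\mathcal Q}^{-1} \frac{d{\mathcal Q}}{du} {\mathcal Q}^{-1} {\bf b}) = 0$.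
   Context: Two-parameter estimation with a full-rank density matrix $\rho=\rho(\theta_1,\theta_2)$ of dimension $D$ with spectral decomposition $\rho=\sum_j p_j|e_j\rangle\langle e_j|$, and $\rho_1=\partial_1\rho$, $\rho_2=\partial_2\rho$. The HCRB with identity weight is $C_{\mathsf H}=\min_{X_1,X_2}\{{\rm Tr}\,{\rm Re}Z+\|{\rm Im}Z\|_1\}$ over Hermitian $X_1,X_2$ with ${\rm Tr}(\rho X_j)=0$, ${\rm Tr}(\partial_j\rho X_k)=\delta_{jk}$, where $Z_{jk}={\rm Tr}(\rho X_jX_k)$. For $0<u<1$ define $\gamma_1=-\mathbb{1}_D/2$, $\gamma_2=-\sum_{j,k}(u p_k+(1-u)p_j)^{-1}\langle e_j|\rho_1/2|e_k\rangle|e_j\rangle\langle e_k|$, $\gamma_3=-\sum_{j,k}(u p_k+(1-u)p_j)^{-1}\langle e_j|\rho_2/2|e_k\rangle|e_j\rangle\langle e_k|$. Define the $3\times3$ matrices $G_1=\begin{pmatrix}1/4&0&0\\0&{\rm Tr}(\gamma_2\rho\gamma_2^\dagger)&{\rm Tr}(\gamma_2\rho\gamma_3^\dagger)\\0&{\rm Tr}(\gamma_3\rho\gamma_2^\dagger)&{\rm Tr}(\gamma_3\rho\gamma_3^\dagger)\end{pmatrix}$, $G_2=\begin{pmatrix}1/4&0&0\\0&{\rm Tr}(\gamma_2^\dagger\rho\gamma_2)&{\rm Tr}(\gamma_2^\dagger\rho\gamma_3)\\0&{\rm Tr}(\gamma_3^\dagger\rho\gamma_2)&{\rm Tr}(\gamma_3^\dagger\rho\gamma_3)\end{pmatrix}$,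 $G_3=\begin{pmatrix}-1/2&0&0\\0&{\rm Tr}(\rho_1\gamma_2)&{\rm Tr}(\rho_1\gamma_3)\\0&{\rm Tr}(\rho_2\gamma_2)&{\rm Tr}(\rho_2\gamma_3)\end{pmatrix}$, and the $6\times6$ block matrices ${\mathcal Q_1}=\begin{pmatrix}G_1&-iG_1\\ iG_1&G_1\end{pmatrix}$, ${\mathcal Q_2}=\begin{pmatrix}G_2&iG_2\\ -iG_2&G_2\end{pmatrix}$, ${\mathcal Q_3}=\frac12\begin{pmatrix}G_3+G_3^*&i(G_3-G_3^* )\\ -i(G_3-G_3^* )&G_3+G_3^*\end{pmatrix}$. *)

theory Defs
  imports "HOL-Analysis.Analysis"
begin

definition cadj :: "complex^'n^'n \<Rightarrow> complex^'n^'n" where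
  "cadj A = (\<chi> i j. cnj (A$j$i))"

definition hermitian_mat :: "complex^'n^'n \<Rightarrow> bool" where
  "hermitian_mat A \<longleftrightarrow> cadj A = A"

definition cinner :: "complex^'n \<Rightarrow> complex^'n \<Rightarrow> complex" where
  "cinner x y = (\<Sum>i\<in>UNIV. cnj (x$i) * y$i)"

text \<open>gamma operator:
  gamma_op u p e A = - sum_{j,k} (u p_k + (1-u) p_j)^{-1} <e_j|A/2|e_k> |e_j><e_k|.
  gamma_2 = gamma_op u p e rho_1,  gamma_3 = gamma_op u p e rho_2.\<close>
definition gamma_op :: "real \<Rightarrow> ('n::finite \<Rightarrow> real) \<Rightarrow> ('n \<Rightarrow> complex^'n) \<Rightarrow>
    complex^'n^'n \<Rightarrow> complex^'n^'n" where
  "gamma_op u p e A = (\<chi> a b. \<Sum>j\<in>UNIV. \<Sum>k\<in>UNIV.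
      - (cinner (e j) (A *v e k) / 2) / complex_of_real (u * p k + (1 - u) * p j)
        * (e j $ a) * cnj (e k $ b))"

section \<open>The 3x3 matrices G1, G2, G3 (index 0,1,2 of type 3 = rows 1,2,3 of the paper)\<close>

definition G1 :: "real \<Rightarrow> complex^'n^'n \<Rightarrow> complex^'n^'n \<Rightarrow> complex^'n^'n \<Rightarrow>
    ('n::finite \<Rightarrow> real) \<Rightarrow> ('n \<Rightarrow> complex^'n) \<Rightarrow> complex^3^3" where
  "G1 u \<rho> \<rho>1 \<rho>2 p e = (let g = (\<lambda>a::3. if a = 1 then gamma_op u p e \<rho>1 else gamma_op u p e \<rho>2) in
     (\<chi> a b. if a = 0 \<and> b = 0 then 1/4 else if a = 0 \<or> b = 0 then 0
             else trace (g a ** \<rho> ** cadj (g b))))"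

definition G2 :: "real \<Rightarrow> complex^'n^'n \<Rightarrow> complex^'n^'n \<Rightarrow> complex^'n^'n \<Rightarrow>
    ('n::finite \<Rightarrow> real) \<Rightarrow> ('n \<Rightarrow> complex^'n) \<Rightarrow> complex^3^3" where
  "G2 u \<rho> \<rho>1 \<rho>2 p e = (let g = (\<lambda>a::3. if a = 1 then gamma_op u p e \<rho>1 else gamma_op u p e \<rho>2) in
     (\<chi> a b. if a = 0 \<and> b = 0 then 1/4 else if a = 0 \<or> b = 0 then 0
             else trace (cadj (g a) ** \<rho> ** g b)))"

definition G3 :: "real \<Rightarrow> complex^'n^'n \<Rightarrow> complex^'n^'n \<Rightarrow>
    ('n::finite \<Rightarrow> real) \<Rightarrow> ('n \<Rightarrow> complex^'n) \<Rightarrow> complex^3^3" where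
  "G3 u \<rho>1 \<rho>2 p e = (let g = (\<lambda>a::3. if a = 1 then gamma_op u p e \<rho>1 else gamma_op u p e \<rho>2);
                            r = (\<lambda>a::3. if a = 1 then \<rho>1 else \<rho>2) in
     (\<chi> a b. if a = 0 \<and> b = 0 then - 1/2 else if a = 0 \<or> b = 0 then 0
             else trace (r a ** g b)))"

section \<open>6x6 block matrices; index type 3 + 3: Inl a = row a+1, Inr a = row a+4\<close>

definition blk6 :: "'a^3^3 \<Rightarrow> 'a^3^3 \<Rightarrow> 'a^3^3 \<Rightarrow> 'a^3^3 \<Rightarrow> 'a^(3+3)^(3+3)" where
  "blk6 A B C D = (\<chi> i j. case i of
       Inl a \<Rightarrow> (case j of Inl b \<Rightarrow> A$a$b | Inr b \<Rightarrow> B$a$b)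
     | Inr a \<Rightarrow> (case j of Inl b \<Rightarrow> C$a$b | Inr b \<Rightarrow> D$a$b))"

definition cscale :: "complex \<Rightarrow> complex^'m^'k \<Rightarrow> complex^'m^'k" where
  "cscale c M = (\<chi> i j. c * M$i$j)"

definition cconj :: "complex^'m^'k \<Rightarrow> complex^'m^'k" where
  "cconj M = (\<chi> i j. cnj (M$i$j))"

definition ReM :: "complex^'m^'k \<Rightarrow> real^'m^'k" where
  "ReM M = (\<chi> i j. Re (M$i$j))"

definition Q1 :: "real \<Rightarrow> complex^'n^'n \<Rightarrow> complex^'n^'n \<Rightarrow> complex^'n^'n \<Rightarrow>
    ('n::finite \<Rightarrow> real) \<Rightarrow> ('n \<Rightarrow> complex^'n) \<Rightarrow> complex^(3+3)^(3+3)" where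
  "Q1 u \<rho> \<rho>1 \<rho>2 p e = (let G = G1 u \<rho> \<rho>1 \<rho>2 p e in
     blk6 G (cscale (- \<i>) G) (cscale \<i> G) G)"

definition Q2 :: "real \<Rightarrow> complex^'n^'n \<Rightarrow> complex^'n^'n \<Rightarrow> complex^'n^'n \<Rightarrow>
    ('n::finite \<Rightarrow> real) \<Rightarrow> ('n \<Rightarrow> complex^'n) \<Rightarrow> complex^(3+3)^(3+3)" where
  "Q2 u \<rho> \<rho>1 \<rho>2 p e = (let G = G2 u \<rho> \<rho>1 \<rho>2 p e in
     blk6 G (cscale \<i> G) (cscale (- \<i>) G) G)"

definition Q3 :: "real \<Rightarrow> complex^'n^'n \<Rightarrow> complex^'n^'n \<Rightarrow>
    ('n::finite \<Rightarrow> real) \<Rightarrow> ('n \<Rightarrow> complex^'n) \<Rightarrow> complex^(3+3)^(3+3)" where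
  "Q3 u \<rho>1 \<rho>2 p e = (let G = G3 u \<rho>1 \<rho>2 p e in
     cscale (1/2) (blk6 (G + cconj G) (cscale \<i> (G - cconj G))
                        (cscale (- \<i>) (G - cconj G)) (G + cconj G)))"

definition Qmat :: "real \<Rightarrow> complex^'n^'n \<Rightarrow> complex^'n^'n \<Rightarrow> complex^'n^'n \<Rightarrow>
    ('n::finite \<Rightarrow> real) \<Rightarrow> ('n \<Rightarrow> complex^'n) \<Rightarrow> real^(3+3)^(3+3)" where
  "Qmat u \<rho> \<rho>1 \<rho>2 p e =
     u *\<^sub>R ReM (Q1 u \<rho> \<rho>1 \<rho>2 p e) + (1 - u) *\<^sub>R ReM (Q2 u \<rho> \<rho>1 \<rho>2 p e) + ReM (Q3 u \<rho>1 \<rho>2 p e)"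

text \<open>b = (0,1,0,0,0,1)^T: rows 2 and 6, i.e. indices Inl 1 and Inr 2.\<close>
definition bvec :: "real^(3+3)" where
  "bvec = (\<chi> i. if i = Inl 1 \<or> i = Inr 2 then 1 else 0)"

definition neg_definite :: "real^'k^'k \<Rightarrow> bool" where
  "neg_definite Q \<longleftrightarrow> (\<forall>x. x \<noteq> 0 \<longrightarrow> x \<bullet> (Q *v x) < 0)"

definition Lbound :: "real^(3+3)^(3+3) \<Rightarrow> real" where
  "Lbound Q = - (1/4) * (bvec \<bullet> (matrix_inv Q *v bvec))"

definition cquad :: "real^'k \<Rightarrow> complex^'k^'k \<Rightarrow> real^'k \<Rightarrow> complex" where
  "cquad x M y = (\<Sum>i\<in>UNIV. \<Sum>j\<in>UNIV. complex_of_real (x$i) * M$i$j * complex_of_real (y$j))"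

definition Ubound :: "real^(3+3)^(3+3) \<Rightarrow> complex^(3+3)^(3+3) \<Rightarrow> complex^(3+3)^(3+3) \<Rightarrow> real" where
  "Ubound Q A B = (1/4) * max (Re (cquad (bvec v* matrix_inv Q) A (matrix_inv Q *v bvec)))
                              (Re (cquad (bvec v* matrix_inv Q) B (matrix_inv Q *v bvec)))"

text \<open>Trace norm (sum of singular values) of the real 2x2 matrix [[a,b],[c,d]]:
  singular values are square roots of the eigenvalues of A^T A, whose trace is
  t = a^2+b^2+c^2+d^2 and determinant is (ad-bc)^2.\<close>
definition trace_norm_2x2 :: "real \<Rightarrow> real \<Rightarrow> real \<Rightarrow> real \<Rightarrow> real" where
  "trace_norm_2x2 a b c d =
     (let t = a\<^sup>2 + b\<^sup>2 + c\<^sup>2 + d\<^sup>2; \<delta> = (a*d - b*c)\<^sup>2 in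
        sqrt ((t + sqrt (t\<^sup>2 - 4*\<delta>)) / 2) + sqrt ((t - sqrt (t\<^sup>2 - 4*\<delta>)) / 2))"

definition holevo_feasible :: "complex^'n^'n \<Rightarrow> complex^'n^'n \<Rightarrow> complex^'n^'n \<Rightarrow>
    complex^'n^'n \<Rightarrow> complex^'n^'n \<Rightarrow> bool" where
  "holevo_feasible \<rho> \<rho>1 \<rho>2 X1 X2 \<longleftrightarrow>
     hermitian_mat X1 \<and> hermitian_mat X2 \<and>
     trace (\<rho> ** X1) = 0 \<and> trace (\<rho> ** X2) = 0 \<and>
     trace (\<rho>1 ** X1) = 1 \<and> trace (\<rho>1 ** X2) = 0 \<and>
     trace (\<rho>2 ** X1) = 0 \<and> trace (\<rho>2 ** X2) = 1"

definition holevo_fun :: "complex^'n^'n \<Rightarrow> complex^'n^'n \<Rightarrow> complex^'n^'n \<Rightarrow> real" where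
  "holevo_fun \<rho> X1 X2 =
     (let z11 = trace (\<rho> ** X1 ** X1); z12 = trace (\<rho> ** X1 ** X2);
          z21 = trace (\<rho> ** X2 ** X1); z22 = trace (\<rho> ** X2 ** X2) in
      Re z11 + Re z22 + trace_norm_2x2 (Im z11) (Im z12) (Im z21) (Im z22))"

definition HCRB :: "complex^'n^'n \<Rightarrow> complex^'n^'n \<Rightarrow> complex^'n^'n \<Rightarrow> real" where
  "HCRB \<rho> \<rho>1 \<rho>2 = Inf {holevo_fun \<rho> X1 X2 | X1 X2. holevo_feasible \<rho> \<rho>1 \<rho>2 X1 X2}"

end

theory Submission
  imports Defs
begin


lemma cadj_cadj[simp]: "cadj (cadj A) = A"
  by (simp add: cadj_def vec_eq_iff)

lemma cadj_mult: "cadj (A ** B) = cadj B ** cadj (A::complex^'n^'n)"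
  by (simp add: cadj_def vec_eq_iff matrix_matrix_mult_def mult.commute)

lemma cadj_add: "cadj (A + B) = cadj A + cadj (B::complex^'n^'n)"
  by (simp add: cadj_def vec_eq_iff)

lemma cadj_diff: "cadj (A - B) = cadj A - cadj (B::complex^'n^'n)"
  by (simp add: cadj_def vec_eq_iff)

lemma cadj_cscale: "cadj (cscale c A) = cscale (cnj c) (cadj (A::complex^'n^'n))"
  by (simp add: cadj_def cscale_def vec_eq_iff)

lemma trace_cadj: "trace (cadj A) = cnj (trace (A::complex^'n^'n))"
  by (simp add: cadj_def trace_def)

lemma trace_cscale: "trace (cscale c A) = c * trace (A::complex^'n^'n)"
  by (simp add: cscale_def trace_def sum_distrib_left)

lemma cscale_mult_left: "cscale c A ** B = cscale c (A ** (B::complex^'n^'n))"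
  by (simp add: cscale_def vec_eq_iff matrix_matrix_mult_def sum_distrib_left mult.assoc)

lemma cscale_mult_right: "A ** cscale c B = cscale c (A ** (B::complex^'n^'n))"
  by (simp add: cscale_def vec_eq_iff matrix_matrix_mult_def sum_distrib_left algebra_simps)

lemma cscale_add: "cscale c (A + B) = cscale c A + cscale c (B::complex^'n^'n)"
  by (simp add: cscale_def vec_eq_iff algebra_simps)

lemma cscale_add2: "cscale (c + d) A = cscale c A + cscale d (A::complex^'n^'n)"
  by (simp add: cscale_def vec_eq_iff algebra_simps)

lemma cscale_cscale: "cscale c (cscale d A) = cscale (c * d) (A::complex^'n^'n)"
  by (simp add: cscale_def vec_eq_iff algebra_simps)

lemma cscale_one[simp]: "cscale 1 A = A"
  by (simp add: cscale_def vec_eq_iff)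

lemma matrix_add_rdistrib': "(B + C) ** A = B ** A + C ** (A::'a::semiring_1^'n^'n)"
  by (simp add: matrix_matrix_mult_def vec_eq_iff sum.distrib distrib_right)

lemma matrix_diff_ldistrib: "A ** (B - C) = A ** B - A ** (C::'a::ring_1^'n^'n)"
  by (simp add: matrix_matrix_mult_def vec_eq_iff sum_subtractf right_diff_distrib)

lemma matrix_diff_rdistrib: "(B - C) ** A = B ** A - C ** (A::'a::ring_1^'n^'n)"
  by (simp add: matrix_matrix_mult_def vec_eq_iff sum_subtractf left_diff_distrib)

definition Emat :: "('n::finite \<Rightarrow> complex^'n) \<Rightarrow> complex^'n^'n" where
  "Emat e = (\<chi> i j. e j $ i)"

definition diagm :: "('n::finite \<Rightarrow> complex) \<Rightarrow> complex^'n^'n" where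
  "diagm d = (\<chi> i j. if i = j then d i else 0)"

lemma EhE:
  assumes "\<forall>j k. cinner (e j) (e k) = (if j = k then 1 else 0)"
  shows "cadj (Emat e) ** Emat e = mat 1"
  using assms by (simp add: cadj_def Emat_def matrix_matrix_mult_def vec_eq_iff cinner_def mat_def)

lemma EEh:
  assumes "\<forall>j k. cinner (e j) (e k) = (if j = k then 1 else 0)"
  shows "Emat e ** cadj (Emat e) = mat 1"
  using EhE[OF assms] matrix_left_right_inverse by blast

lemma matrix_mult_entry: "(A ** B) $ i $ j = (\<Sum>k\<in>UNIV. A $ i $ k * B $ k $ j)"
  by (simp add: matrix_matrix_mult_def)

lemma mult_diagm: "(A ** diagm d) = (\<chi> a k. A $ a $ k * d k)"
  by (simp add: vec_eq_iff matrix_matrix_mult_def diagm_def if_distrib[where f="\<lambda>x. _ * x"] cong: if_cong)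

lemma rho_eq:
  assumes "\<rho> = (\<chi> a b. \<Sum>j\<in>UNIV. complex_of_real (p j) * (e j $ a) * cnj (e j $ b))"
  shows "\<rho> = Emat e ** diagm (\<lambda>j. of_real (p j)) ** cadj (Emat e)"
  using assms
  unfolding mult_diagm using assms
  by (simp add: vec_eq_iff matrix_matrix_mult_def cadj_def Emat_def algebra_simps)

lemma cinner_eq: "cinner (e j) (R *v e k) = (cadj (Emat e) ** R ** Emat e) $ j $ k"
proof -
  have "cinner (e j) (R *v e k) = (\<Sum>i\<in>UNIV. \<Sum>l\<in>UNIV. cnj (e j $ i) * R $ i $ l * e k $ l)"
    by (simp add: cinner_def matrix_vector_mult_def sum_distrib_left mult.assoc)
  also have "\<dots> = (\<Sum>l\<in>UNIV. \<Sum>i\<in>UNIV. cnj (e j $ i) * R $ i $ l * e k $ l)"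
    by (rule sum.swap)
  also have "\<dots> = (cadj (Emat e) ** R ** Emat e) $ j $ k"
    by (simp add: matrix_matrix_mult_def cadj_def Emat_def sum_distrib_right)
  finally show ?thesis .
qed

lemma diagm_mult: "(diagm d ** A) = (\<chi> j k. d j * A $ j $ k)"
  by (simp add: vec_eq_iff matrix_matrix_mult_def diagm_def if_distrib[where f="\<lambda>x. x * _"] cong: if_cong)

definition Mg :: "real \<Rightarrow> ('n::finite \<Rightarrow> real) \<Rightarrow> ('n \<Rightarrow> complex^'n) \<Rightarrow> complex^'n^'n \<Rightarrow> complex^'n^'n" where
  "Mg u p e R = (\<chi> j k. - ((cadj (Emat e) ** R ** Emat e) $ j $ k / 2) / complex_of_real (u * p k + (1 - u) * p j))"

lemma gamma_eq: "gamma_op u p e R = Emat e ** Mg u p e R ** cadj (Emat e)"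
proof -
  have "gamma_op u p e R $ a $ b = (Emat e ** Mg u p e R ** cadj (Emat e)) $ a $ b" for a b
  proof -
    have "gamma_op u p e R $ a $ b = (\<Sum>j\<in>UNIV. \<Sum>k\<in>UNIV. e j $ a * Mg u p e R $ j $ k * cnj (e k $ b))"
      by (simp add: gamma_op_def Mg_def cinner_eq algebra_simps)
    also have "\<dots> = (\<Sum>k\<in>UNIV. \<Sum>j\<in>UNIV. e j $ a * Mg u p e R $ j $ k * cnj (e k $ b))"
      by (rule sum.swap)
    also have "\<dots> = (Emat e ** Mg u p e R ** cadj (Emat e)) $ a $ b"
      by (simp add: matrix_matrix_mult_def Emat_def cadj_def sum_distrib_right)
    finally show ?thesis .
  qed
  then show ?thesis by (simp add: vec_eq_iff)
qed

lemma K1: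
  assumes u: "0 < u" "u < 1" and p_pos: "\<forall>j. p j > 0"
    and ortho: "\<forall>j k. cinner (e j) (e k) = (if j = k then 1 else 0)"
    and spectral: "\<rho> = (\<chi> a b. \<Sum>j\<in>UNIV. complex_of_real (p j) * (e j $ a) * cnj (e j $ b))"
  shows "cscale (of_real u) (gamma_op u p e R ** \<rho>) + cscale (of_real (1 - u)) (\<rho> ** gamma_op u p e R)
         = cscale (- 1/2) R"
proof -
  define E where "E = Emat e"
  define P where "P = diagm (\<lambda>j. complex_of_real (p j))"
  define M where "M = Mg u p e R"
  have EhE': "cadj E ** E = mat 1" using EhE[OF ortho] by (simp add: E_def)
  have EEh': "E ** cadj E = mat 1" using EEh[OF ortho] by (simp add: E_def)
  have rho: "\<rho> = E ** P ** cadj E" using rho_eq[OF spectral] by (simp add: E_def P_def)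
  have g: "gamma_op u p e R = E ** M ** cadj E" by (simp add: gamma_eq E_def M_def)
  have den: "u * p k + (1 - u) * p j > 0" for j k
    using u p_pos[rule_format, of k] p_pos[rule_format, of j]
    by (smt (verit) mult_pos_pos)
  have inner: "cscale (of_real u) (M ** P) + cscale (of_real (1 - u)) (P ** M) = cscale (-1/2) (cadj E ** R ** E)"
  proof -
    have "complex_of_real u * (M $ j $ k * complex_of_real (p k)) + complex_of_real (1 - u) * (complex_of_real (p j) * M $ j $ k)
        = - 1/2 * (cadj E ** R ** E) $ j $ k" for j k
    proof -
      have nz: "complex_of_real (u * p k + (1 - u) * p j) \<noteq> 0"
        by (metis den of_real_eq_0_iff order_less_irrefl)
      have "complex_of_real u * (M $ j $ k * complex_of_real (p k)) + complex_of_real (1 - u) * (complex_of_real (p j) * M $ j $ k)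
          = M $ j $ k * complex_of_real (u * p k + (1 - u) * p j)" by (simp add: algebra_simps)
      also have "\<dots> = - 1/2 * (cadj E ** R ** E) $ j $ k"
      proof -
        have Mjk: "M $ j $ k = - ((cadj E ** R ** E) $ j $ k / 2) / complex_of_real (u * p k + (1 - u) * p j)"
          by (simp add: M_def Mg_def E_def)
        have gen: "\<And>X d. (d::complex) \<noteq> 0 \<Longrightarrow> (- (X / 2) / d) * d = - 1/2 * X"
          by (simp add: field_simps)
        show ?thesis unfolding Mjk by (rule gen[OF nz])
      qed
      finally show ?thesis .
    qed
    then show ?thesis by (simp add: vec_eq_iff cscale_def P_def mult_diagm diagm_mult)
  qed
  have "cscale (of_real u) (gamma_op u p e R ** \<rho>) + cscale (of_real (1 - u)) (\<rho> ** gamma_op u p e R)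
      = cscale (of_real u) (E ** (M ** P) ** cadj E) + cscale (of_real (1 - u)) (E ** (P ** M) ** cadj E)"
  proof -
    have a: "E ** M ** cadj E ** (E ** P ** cadj E) = E ** (M ** P) ** cadj E"
      by (simp add: matrix_mul_assoc) (metis EhE' matrix_mul_assoc matrix_mul_rid)
    have b: "E ** P ** cadj E ** (E ** M ** cadj E) = E ** (P ** M) ** cadj E"
      by (simp add: matrix_mul_assoc) (metis EhE' matrix_mul_assoc matrix_mul_rid)
    show ?thesis by (simp add: g rho a b)
  qed
  also have "\<dots> = E ** (cscale (of_real u) (M ** P) + cscale (of_real (1 - u)) (P ** M)) ** cadj E"
    by (simp add: matrix_add_ldistrib matrix_add_rdistrib' cscale_mult_left cscale_mult_right)
  also have "\<dots> = cscale (-1/2) ((E ** cadj E) ** R ** (E ** cadj E))"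
    unfolding inner by (simp add: cscale_mult_left cscale_mult_right matrix_mul_assoc)
  also have "\<dots> = cscale (-1/2) R" by (simp add: EEh')
  finally show ?thesis .
qed



lemma sum_UNIV_plus: "sum f (UNIV :: ('a::finite + 'b::finite) set) = (\<Sum>a\<in>UNIV. f (Inl a)) + (\<Sum>b\<in>UNIV. f (Inr b))"
  using sum.Plus[of "UNIV::'a set" "UNIV::'b set" f] by (simp add: comp_def)

lemma blk_form:
  fixes A B C D :: "complex^3^3" and v w :: "real^(3+3)"
  shows "v \<bullet> (ReM (blk6 A B C D) *v w) =
    (\<Sum>a\<in>UNIV. \<Sum>b\<in>UNIV. v$Inl a * Re (A$a$b) * w$Inl b + v$Inl a * Re (B$a$b) * w$Inr b
        + v$Inr a * Re (C$a$b) * w$Inl b + v$Inr a * Re (D$a$b) * w$Inr b)"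
  by (simp add: inner_vec_def matrix_vector_mult_def sum_UNIV_plus ReM_def blk6_def
      sum_distrib_left sum.distrib algebra_simps)

definition cvec :: "real^(3+3) \<Rightarrow> 3 \<Rightarrow> complex" where
  "cvec w a = complex_of_real (w $ Inl a) + \<i> * complex_of_real (w $ Inr a)"

lemma form1:
  fixes G :: "complex^3^3"
  shows "v \<bullet> (ReM (blk6 G (cscale (- \<i>) G) (cscale \<i> G) G) *v w) =
     Re (\<Sum>a\<in>UNIV. \<Sum>b\<in>UNIV. cvec v a * cnj (cvec w b) * G$a$b)"
  unfolding blk_form Re_sum
  by (intro sum.cong refl) (simp add: cvec_def cscale_def algebra_simps)

lemma form2:
  fixes G :: "complex^3^3"
  shows "v \<bullet> (ReM (blk6 G (cscale \<i> G) (cscale (- \<i>) G) G) *v w) =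
     Re (\<Sum>a\<in>UNIV. \<Sum>b\<in>UNIV. cnj (cvec v a) * cvec w b * G$a$b)"
  unfolding blk_form Re_sum
  by (intro sum.cong refl) (simp add: cvec_def cscale_def algebra_simps)

lemma form3:
  fixes G :: "complex^3^3"
  shows "v \<bullet> (ReM (cscale (1/2) (blk6 (G + cconj G) (cscale \<i> (G - cconj G))
                        (cscale (- \<i>) (G - cconj G)) (G + cconj G))) *v w) =
     Re (\<Sum>a\<in>UNIV. \<Sum>b\<in>UNIV. cnj (cvec v a) * cvec w b * G$a$b)"
proof -
  have "ReM (cscale (1/2) (blk6 (G + cconj G) (cscale \<i> (G - cconj G))
                        (cscale (- \<i>) (G - cconj G)) (G + cconj G))) = ReM (blk6 (cscale (1/2) (G + cconj G)) (cscale (\<i>/2) (G - cconj G))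
                        (cscale (- \<i>/2) (G - cconj G)) (cscale (1/2) (G + cconj G)))"
    by (simp add: ReM_def cscale_def blk6_def cconj_def vec_eq_iff split: sum.split)
  then show ?thesis
    unfolding Re_sum by (simp only: blk_form) (intro sum.cong refl, simp add: cvec_def cscale_def cconj_def algebra_simps)
qed



lemma mat0_mult: "(0::'a::semiring_1^'n^'n) ** B = 0"
  by (simp add: matrix_matrix_mult_def vec_eq_iff)
lemma mult_mat0: "B ** (0::'a::semiring_1^'n^'n) = 0"
  by (simp add: matrix_matrix_mult_def vec_eq_iff)

lemma sum_mmult_left: "finite A \<Longrightarrow> (\<Sum>a\<in>A. f a) ** (B::complex^'n^'n) = (\<Sum>a\<in>A. f a ** B)"
  by (induct A rule: finite_induct) (simp_all add: mat0_mult matrix_add_rdistrib')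
lemma sum_mmult_right: "finite A \<Longrightarrow> (B::complex^'n^'n) ** (\<Sum>a\<in>A. f a) = (\<Sum>a\<in>A. B ** f a)"
  by (induct A rule: finite_induct) (simp_all add: mult_mat0 matrix_add_ldistrib)
lemma cadj_0: "cadj (0::complex^'n^'n) = 0"
  by (simp add: cadj_def vec_eq_iff)
lemma cadj_sum: "finite A \<Longrightarrow> cadj (\<Sum>a\<in>A. f a) = (\<Sum>a\<in>A. cadj (f a :: complex^'n^'n))"
  by (induct A rule: finite_induct) (simp_all add: cadj_0 cadj_add)
lemma trace_sum: "finite A \<Longrightarrow> trace (\<Sum>a\<in>A. f a) = (\<Sum>a\<in>A. trace (f a :: complex^'n^'n))"
  by (induct A rule: finite_induct) (simp_all add: trace_add, simp add: trace_def)

lemma cadj_mat1: "cadj (mat 1 :: complex^'n^'n) = mat 1"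
  by (simp add: cadj_def mat_def vec_eq_iff)

locale hs =
  fixes \<rho> \<rho>1 \<rho>2 :: "complex^'n^'n"
    and p :: "'n::finite \<Rightarrow> real"
    and e :: "'n \<Rightarrow> complex^'n"
  assumes p_pos: "\<forall>j. p j > 0"
    and p_sum: "(\<Sum>j\<in>UNIV. p j) = 1"
    and ortho: "\<forall>j k. cinner (e j) (e k) = (if j = k then 1 else 0)"
    and spectral: "\<rho> = (\<chi> a b. \<Sum>j\<in>UNIV. complex_of_real (p j) * (e j $ a) * cnj (e j $ b))"
    and herm1: "hermitian_mat \<rho>1" and herm2: "hermitian_mat \<rho>2"
    and tr1: "trace \<rho>1 = 0" and tr2: "trace \<rho>2 = 0"
begin

definition gg :: "real \<Rightarrow> 3 \<Rightarrow> complex^'n^'n" where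
  "gg u a = (if a = 0 then cscale (-1/2) (mat 1) else if a = 1 then gamma_op u p e \<rho>1 else gamma_op u p e \<rho>2)"
definition RR :: "3 \<Rightarrow> complex^'n^'n" where
  "RR a = (if a = 0 then \<rho> else if a = 1 then \<rho>1 else \<rho>2)"
definition T :: "complex^'n^'n \<Rightarrow> complex^'n^'n \<Rightarrow> complex" where
  "T A B = trace (A ** \<rho> ** cadj B)"
definition T2 :: "complex^'n^'n \<Rightarrow> complex^'n^'n \<Rightarrow> complex" where
  "T2 A B = trace (cadj A ** \<rho> ** B)"
definition Cm :: "real \<Rightarrow> real^(3+3) \<Rightarrow> complex^'n^'n" where
  "Cm u w = (\<Sum>a\<in>UNIV. cscale (cvec w a) (gg u a))"

lemma rho_herm: "cadj \<rho> = \<rho>"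
  by (subst (1 2) spectral) (simp add: cadj_def vec_eq_iff algebra_simps)

lemma RR_herm: "cadj (RR a) = RR a"
  using herm1 herm2 rho_herm by (simp add: RR_def hermitian_mat_def)

lemma trace_rho: "trace \<rho> = 1"
proof -
  have "trace \<rho> = (\<Sum>i\<in>UNIV. \<Sum>j\<in>UNIV. complex_of_real (p j) * (cnj (e j $ i) * e j $ i))"
    by (subst spectral) (simp add: trace_def algebra_simps)
  also have "\<dots> = (\<Sum>j\<in>UNIV. complex_of_real (p j) * cinner (e j) (e j))"
    by (subst sum.swap) (simp add: cinner_def sum_distrib_left)
  also have "\<dots> = 1" using ortho p_sum
    by (simp flip: of_real_sum) 
  finally show ?thesis .
qed

lemma K1g:
  assumes "0 < u" "u < 1"
  shows "cscale (of_real u) (gg u a ** \<rho>) + cscale (of_real (1 - u)) (\<rho> ** gg u a) = cscale (-1/2) (RR a)"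
proof (cases "a = 0")
  case True
  then show ?thesis
    apply (simp add: gg_def RR_def cscale_mult_left cscale_mult_right)
    apply (simp add: vec_eq_iff cscale_def algebra_simps)
    done
next
  case False
  then show ?thesis
    using K1[OF assms p_pos ortho spectral] by (simp add: gg_def RR_def)
qed

lemma trace_g_rho:
  assumes "0 < u" "u < 1" "a \<noteq> 0"
  shows "trace (gg u a ** \<rho>) = 0"
proof -
  have "trace (cscale (of_real u) (gg u a ** \<rho>) + cscale (of_real (1 - u)) (\<rho> ** gg u a)) = trace (gg u a ** \<rho>)"
    by (simp add: trace_add trace_cscale trace_mul_sym[of \<rho>] algebra_simps)
  moreover have "trace (cscale (-1/2) (RR a)) = 0"
    using assms tr1 tr2 by (simp add: trace_cscale RR_def)
  ultimately show ?thesis using K1g[OF assms(1,2), of a] by simp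
qed

lemma trace_rho_gh:
  assumes "0 < u" "u < 1" "a \<noteq> 0"
  shows "trace (\<rho> ** cadj (gg u a)) = 0"
proof -
  have "\<rho> ** cadj (gg u a) = cadj (gg u a ** \<rho>)" by (simp add: cadj_mult rho_herm)
  then show ?thesis using trace_g_rho[OF assms] by (simp add: trace_cadj)
qed

lemma gg_nz: "a \<noteq> 0 \<Longrightarrow> gg u a = (if a = 1 then gamma_op u p e \<rho>1 else gamma_op u p e \<rho>2)"
  by (simp add: gg_def)

lemma G1_eq:
  assumes "0 < u" "u < 1"
  shows "G1 u \<rho> \<rho>1 \<rho>2 p e = (\<chi> a b. T (gg u a) (gg u b))"
proof -
  have "G1 u \<rho> \<rho>1 \<rho>2 p e $ a $ b = T (gg u a) (gg u b)" for a b
  proof -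
    consider "a = 0" "b = 0" | "a = 0" "b \<noteq> 0" | "a \<noteq> 0" "b = 0" | "a \<noteq> 0" "b \<noteq> 0" by blast
    then show ?thesis
    proof cases
      case 1 then show ?thesis
        by (simp add: G1_def T_def gg_def cadj_cscale cadj_mat1 cscale_mult_left cscale_mult_right trace_cscale trace_rho)
    next
      case 2 then show ?thesis using trace_rho_gh[OF assms 2(2)]
        by (simp add: G1_def T_def gg_def[of u 0] cscale_mult_left trace_cscale)
    next
      case 3 then show ?thesis using trace_g_rho[OF assms 3(1)]
        by (simp add: G1_def T_def gg_def[of u 0] cadj_cscale cadj_mat1 cscale_mult_right trace_cscale)
    next
      case 4 then show ?thesis
        by (simp add: G1_def T_def gg_nz Let_def)
    qed
  qed
  then show ?thesis by (simp add: vec_eq_iff)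
qed

lemma G2_eq:
  assumes "0 < u" "u < 1"
  shows "G2 u \<rho> \<rho>1 \<rho>2 p e = (\<chi> a b. T2 (gg u a) (gg u b))"
proof -
  have tr2': "trace (\<rho> ** gg u b) = 0" if "b \<noteq> 0" for b
    using trace_g_rho[OF assms that] by (metis trace_mul_sym)
  have tr3': "trace (cadj (gg u b) ** \<rho>) = 0" if "b \<noteq> 0" for b
    using trace_rho_gh[OF assms that] by (metis trace_mul_sym)
  have "G2 u \<rho> \<rho>1 \<rho>2 p e $ a $ b = T2 (gg u a) (gg u b)" for a b
  proof -
    consider "a = 0" "b = 0" | "a = 0" "b \<noteq> 0" | "a \<noteq> 0" "b = 0" | "a \<noteq> 0" "b \<noteq> 0" by blast
    then show ?thesis
    proof cases
      case 1 then show ?thesis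
        by (simp add: G2_def T2_def gg_def cadj_cscale cadj_mat1 cscale_mult_left cscale_mult_right trace_cscale trace_rho)
    next
      case 2 then show ?thesis using tr2'[OF 2(2)]
        by (simp add: G2_def T2_def gg_def[of u 0] cadj_cscale cadj_mat1 cscale_mult_left trace_cscale)
    next
      case 3 then show ?thesis using tr3'[OF 3(1)]
        by (simp add: G2_def T2_def gg_def[of u 0] cscale_mult_right trace_cscale)
    next
      case 4 then show ?thesis
        by (simp add: G2_def T2_def gg_nz Let_def)
    qed
  qed
  then show ?thesis by (simp add: vec_eq_iff)
qed

lemma G3_eq:
  assumes "0 < u" "u < 1"
  shows "G3 u \<rho>1 \<rho>2 p e = (\<chi> a b. trace (RR a ** gg u b))"
proof -
  have tr2': "trace (\<rho> ** gg u b) = 0" if "b \<noteq> 0" for b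
    using trace_g_rho[OF assms that] by (metis trace_mul_sym)
  have "G3 u \<rho>1 \<rho>2 p e $ a $ b = trace (RR a ** gg u b)" for a b
  proof -
    consider "a = 0" "b = 0" | "a = 0" "b \<noteq> 0" | "a \<noteq> 0" "b = 0" | "a \<noteq> 0" "b \<noteq> 0" by blast
    then show ?thesis
    proof cases
      case 1 then show ?thesis
        by (simp add: G3_def RR_def gg_def cscale_mult_right trace_cscale trace_rho)
    next
      case 2 then show ?thesis using tr2'[OF 2(2)]
        by (simp add: G3_def RR_def gg_def[of u 0])
    next
      case 3 then show ?thesis using tr1 tr2
        by (simp add: G3_def RR_def gg_def[of u 0] cscale_mult_right trace_cscale)
    next
      case 4 then show ?thesis
        by (simp add: G3_def RR_def gg_nz Let_def)
    qed
  qed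
  then show ?thesis by (simp add: vec_eq_iff)
qed

lemma RR_expand:
  assumes "0 < u" "u < 1"
  shows "RR a = cscale (-2) (cscale (of_real u) (\<rho> ** cadj (gg u a)) + cscale (of_real (1 - u)) (cadj (gg u a) ** \<rho>))"
proof -
  have "RR a = cscale (-2) (cscale (of_real u) (gg u a ** \<rho>) + cscale (of_real (1 - u)) (\<rho> ** gg u a))"
    using K1g[OF assms, of a] by (simp add: cscale_cscale)
  then have "cadj (RR a) = cadj (cscale (-2) (cscale (of_real u) (gg u a ** \<rho>) + cscale (of_real (1 - u)) (\<rho> ** gg u a)))"
    by simp
  then show ?thesis by (simp add: RR_herm cadj_cscale cadj_add cadj_mult rho_herm)
qed

lemma G3id:
  assumes "0 < u" "u < 1"
  shows "trace (RR a ** gg u b) = -2 * (of_real u * T (gg u b) (gg u a) + of_real (1 - u) * T2 (gg u a) (gg u b))"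
proof -
  have "trace (RR a ** gg u b) = -2 * (of_real u * trace (\<rho> ** cadj (gg u a) ** gg u b) + of_real (1 - u) * trace (cadj (gg u a) ** \<rho> ** gg u b))"
    by (subst RR_expand[OF assms]) (simp add: cscale_mult_left matrix_add_rdistrib' trace_add trace_cscale)
  moreover have "trace (\<rho> ** cadj (gg u a) ** gg u b) = T (gg u b) (gg u a)"
    unfolding T_def by (simp add: trace_mul_sym[of "\<rho> ** cadj (gg u a)"] matrix_mul_assoc)
  ultimately show ?thesis by (simp add: T2_def)
qed

lemma T_herm: "T B A = cnj (T A B)"
  by (simp add: T_def flip: trace_cadj) (simp add: cadj_mult rho_herm matrix_mul_assoc)

lemma T2_herm: "T2 B A = cnj (T2 A B)"
  by (simp add: T2_def flip: trace_cadj) (simp add: cadj_mult rho_herm matrix_mul_assoc)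

lemma T_sum_left: "T (\<Sum>a\<in>UNIV. cscale (c a) (g a :: complex^'n^'n)) B = (\<Sum>a\<in>(UNIV::3 set). c a * T (g a) B)"
  by (simp add: T_def sum_mmult_left trace_sum cscale_mult_left trace_cscale)
lemma T_sum_right: "T A (\<Sum>a\<in>UNIV. cscale (c a) (g a :: complex^'n^'n)) = (\<Sum>a\<in>(UNIV::3 set). cnj (c a) * T A (g a))"
  by (simp add: T_def cadj_sum sum_mmult_right cadj_cscale cscale_mult_right trace_sum trace_cscale)
lemma T2_sum_left: "T2 (\<Sum>a\<in>UNIV. cscale (c a) (g a :: complex^'n^'n)) B = (\<Sum>a\<in>(UNIV::3 set). cnj (c a) * T2 (g a) B)"
  by (simp add: T2_def cadj_sum sum_mmult_left cadj_cscale cscale_mult_left trace_sum trace_cscale)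
lemma T2_sum_right: "T2 A (\<Sum>a\<in>UNIV. cscale (c a) (g a :: complex^'n^'n)) = (\<Sum>a\<in>(UNIV::3 set). c a * T2 A (g a))"
  by (simp add: T2_def sum_mmult_right cscale_mult_right trace_sum trace_cscale)

lemma B1:
  assumes "0 < u" "u < 1"
  shows "v \<bullet> (ReM (Q1 u \<rho> \<rho>1 \<rho>2 p e) *v w) = Re (T (Cm u v) (Cm u w))"
proof -
  have "T (Cm u v) (Cm u w) = (\<Sum>a\<in>UNIV. \<Sum>b\<in>UNIV. cvec v a * cnj (cvec w b) * T (gg u a) (gg u b))"
    apply (simp add: Cm_def T_sum_left T_sum_right sum_distrib_left)
    apply (subst sum.swap)
    apply (simp add: algebra_simps)
    done
  then show ?thesis
    unfolding Q1_def Let_def form1 by (simp add: G1_eq[OF assms])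
qed

lemma B2:
  assumes "0 < u" "u < 1"
  shows "v \<bullet> (ReM (Q2 u \<rho> \<rho>1 \<rho>2 p e) *v w) = Re (T2 (Cm u v) (Cm u w))"
proof -
  have "T2 (Cm u v) (Cm u w) = (\<Sum>a\<in>UNIV. \<Sum>b\<in>UNIV. cnj (cvec v a) * cvec w b * T2 (gg u a) (gg u b))"
    apply (simp add: Cm_def T2_sum_left T2_sum_right sum_distrib_left)
    apply (subst sum.swap)
    apply (simp add: algebra_simps)
    done
  then show ?thesis
    unfolding Q2_def Let_def form2 by (simp add: G2_eq[OF assms])
qed

lemma sum2_lin: "(\<Sum>a\<in>A. \<Sum>b\<in>B. x a b * (c * (d * t a b + f * s a b))) =
   c * (d * (\<Sum>a\<in>A. \<Sum>b\<in>B. x a b * t a b) + f * (\<Sum>a\<in>A. \<Sum>b\<in>B. x a b * s a b))"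
  for x t s :: "_ \<Rightarrow> _ \<Rightarrow> complex"
  by (simp add: sum_distrib_left sum.distrib algebra_simps)

lemma B3:
  assumes "0 < u" "u < 1"
  shows "v \<bullet> (ReM (Q3 u \<rho>1 \<rho>2 p e) *v w) = -2 * (u * Re (T (Cm u v) (Cm u w)) + (1 - u) * Re (T2 (Cm u v) (Cm u w)))"
proof -
  have e1: "T (Cm u w) (Cm u v) = (\<Sum>a\<in>UNIV. \<Sum>b\<in>UNIV. cnj (cvec v a) * cvec w b * T (gg u b) (gg u a))"
    by (simp add: Cm_def T_sum_left T_sum_right sum_distrib_left algebra_simps)
  have e2: "T2 (Cm u v) (Cm u w) = (\<Sum>a\<in>UNIV. \<Sum>b\<in>UNIV. cnj (cvec v a) * cvec w b * T2 (gg u a) (gg u b))"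
    apply (simp add: Cm_def T2_sum_left T2_sum_right sum_distrib_left)
    apply (subst sum.swap)
    apply (simp add: algebra_simps)
    done
  have h: "Re (T (Cm u w) (Cm u v)) = Re (T (Cm u v) (Cm u w))"
    by (subst T_herm) simp
  have "v \<bullet> (ReM (Q3 u \<rho>1 \<rho>2 p e) *v w) =
      Re (\<Sum>a\<in>UNIV. \<Sum>b\<in>UNIV. cnj (cvec v a) * cvec w b * (-2 * (of_real u * T (gg u b) (gg u a) + of_real (1 - u) * T2 (gg u a) (gg u b))))"
    unfolding Q3_def Let_def form3 by (simp add: G3_eq[OF assms] G3id[OF assms])
  also have "\<dots> = Re (-2 * (of_real u * T (Cm u w) (Cm u v) + of_real (1 - u) * T2 (Cm u v) (Cm u w)))"
    unfolding e1 e2 by (simp only: sum2_lin)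
  also have "\<dots> = -2 * (u * Re (T (Cm u w) (Cm u v)) + (1 - u) * Re (T2 (Cm u v) (Cm u w)))"
    by simp
  finally show ?thesis using h by simp
qed

lemma BL:
  assumes "0 < u" "u < 1"
  shows "v \<bullet> (Qmat u \<rho> \<rho>1 \<rho>2 p e *v w) = - (u * Re (T (Cm u v) (Cm u w)) + (1 - u) * Re (T2 (Cm u v) (Cm u w)))"
proof -
  have "v \<bullet> (Qmat u \<rho> \<rho>1 \<rho>2 p e *v w) = u * (v \<bullet> (ReM (Q1 u \<rho> \<rho>1 \<rho>2 p e) *v w))
     + (1 - u) * (v \<bullet> (ReM (Q2 u \<rho> \<rho>1 \<rho>2 p e) *v w)) + v \<bullet> (ReM (Q3 u \<rho>1 \<rho>2 p e) *v w)"
    by (simp add: Qmat_def matrix_vector_mult_add_rdistrib inner_add_right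
        flip: scaleR_matrix_vector_assoc)
  then show ?thesis by (simp add: B1[OF assms] B2[OF assms] B3[OF assms])
qed

lemma CR1:
  assumes "0 < u" "u < 1"
  shows "of_real u * T A (gg u a) + of_real (1 - u) * T2 (gg u a) A = - 1/2 * trace (A ** RR a)"
proof -
  define K where "K = cscale (of_real u) (\<rho> ** cadj (gg u a)) + cscale (of_real (1 - u)) (cadj (gg u a) ** \<rho>)"
  have k: "K = cscale (-1/2) (RR a)"
    using RR_expand[OF assms, of a] by (simp add: K_def cscale_cscale)
  have t2: "T2 (gg u a) A = trace (A ** (cadj (gg u a) ** \<rho>))"
    unfolding T2_def by (metis trace_mul_sym)
  have t1: "T A (gg u a) = trace (A ** (\<rho> ** cadj (gg u a)))"
    unfolding T_def by (simp add: matrix_mul_assoc)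
  have "of_real u * T A (gg u a) + of_real (1 - u) * T2 (gg u a) A = trace (A ** K)"
    unfolding t1 t2 K_def by (simp add: matrix_add_ldistrib cscale_mult_right trace_add trace_cscale)
  also have "\<dots> = - 1/2 * trace (A ** RR a)"
    by (simp add: k cscale_mult_right trace_cscale)
  finally show ?thesis .
qed

lemma CR:
  assumes "0 < u" "u < 1"
  shows "of_real u * T A (Cm u w) + of_real (1 - u) * T2 (Cm u w) A = - 1/2 * (\<Sum>a\<in>UNIV. cnj (cvec w a) * trace (A ** RR a))"
proof -
  have "of_real u * T A (Cm u w) + of_real (1 - u) * T2 (Cm u w) A
      = (\<Sum>a\<in>UNIV. cnj (cvec w a) * (of_real u * T A (gg u a) + of_real (1 - u) * T2 (gg u a) A))"
    by (simp add: Cm_def T_sum_right T2_sum_left sum_distrib_left distrib_left sum.distrib mult.left_commute)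
  also have "\<dots> = (\<Sum>a\<in>UNIV. cnj (cvec w a) * (- 1/2 * trace (A ** RR a)))"
    by (simp only: CR1[OF assms])
  also have "\<dots> = - 1/2 * (\<Sum>a\<in>UNIV. cnj (cvec w a) * trace (A ** RR a))"
    by (simp add: sum_distrib_left mult.left_commute)
  finally show ?thesis .
qed

end


lemma trace_norm_special: "trace_norm_2x2 0 s (- s) 0 = 2 * \<bar>s\<bar>"
proof -
  have "(s\<^sup>2 + s\<^sup>2)\<^sup>2 - 4 * (s * s)\<^sup>2 = 0" by (simp add: power2_eq_square algebra_simps)
  then show ?thesis by (simp add: trace_norm_2x2_def Let_def)
qed

context hs begin

lemma T_add_left: "T (A + B) C = T A C + T B C"
  by (simp add: T_def matrix_add_rdistrib' trace_add)
lemma T_add_right: "T A (B + C) = T A B + T A C"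
  by (simp add: T_def cadj_add matrix_add_ldistrib trace_add)
lemma T_diff_left: "T (A - B) C = T A C - T B C"
  by (simp add: T_def matrix_diff_rdistrib trace_sub)
lemma T_diff_right: "T A (B - C) = T A B - T A C"
  by (simp add: T_def cadj_diff matrix_diff_ldistrib trace_sub)
lemma T_scale_left: "T (cscale c A) B = c * T A B"
  by (simp add: T_def cscale_mult_left trace_cscale)
lemma T_scale_right: "T A (cscale c B) = cnj c * T A B"
  by (simp add: T_def cadj_cscale cscale_mult_right trace_cscale)
lemma T2_add_left: "T2 (A + B) C = T2 A C + T2 B C"
  by (simp add: T2_def cadj_add matrix_add_rdistrib' trace_add)
lemma T2_add_right: "T2 A (B + C) = T2 A B + T2 A C"
  by (simp add: T2_def matrix_add_ldistrib trace_add)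
lemma T2_diff_left: "T2 (A - B) C = T2 A C - T2 B C"
  by (simp add: T2_def cadj_diff matrix_diff_rdistrib trace_sub)
lemma T2_diff_right: "T2 A (B - C) = T2 A B - T2 A C"
  by (simp add: T2_def matrix_diff_ldistrib trace_sub)
lemma T2_scale_left: "T2 (cscale c A) B = cnj c * T2 A B"
  by (simp add: T2_def cadj_cscale cscale_mult_left trace_cscale)
lemma T2_scale_right: "T2 A (cscale c B) = c * T2 A B"
  by (simp add: T2_def cscale_mult_right trace_cscale)

lemma T_pos: "Re (T M M) \<ge> 0"
proof -
  define E where "E = Emat e"
  define N where "N = M ** E"
  have rho: "\<rho> = E ** diagm (\<lambda>j. complex_of_real (p j)) ** cadj E"
    using rho_eq[OF spectral] by (simp add: E_def)
  have "T M M = trace (N ** diagm (\<lambda>j. complex_of_real (p j)) ** cadj N)"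
    unfolding T_def N_def by (subst rho) (simp add: cadj_mult matrix_mul_assoc)
  also have "\<dots> = (\<Sum>i\<in>UNIV. \<Sum>k\<in>UNIV. complex_of_real (p k) * (N $ i $ k * cnj (N $ i $ k)))"
    unfolding mult_diagm by (simp add: trace_def matrix_matrix_mult_def cadj_def algebra_simps)
  also have "\<dots> = (\<Sum>i\<in>UNIV. \<Sum>k\<in>UNIV. complex_of_real (p k * (cmod (N $ i $ k))\<^sup>2))"
    by (simp only: complex_norm_square of_real_mult)
  finally have "Re (T M M) = (\<Sum>i\<in>UNIV. \<Sum>k\<in>UNIV. p k * (cmod (N $ i $ k))\<^sup>2)"
    by (simp add: Re_sum)
  also have "\<dots> \<ge> 0" using p_pos by (intro sum_nonneg) (simp add: less_imp_le)
  finally show ?thesis .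
qed

lemma T2_eq_T: "T2 A B = T (cadj A) (cadj B)"
  by (simp add: T_def T2_def)

lemma T2_pos: "Re (T2 M M) \<ge> 0"
  using T_pos[of "cadj M"] by (simp add: T2_eq_T)

definition Fq :: "real \<Rightarrow> complex^'n^'n \<Rightarrow> real" where
  "Fq u M = u * Re (T M M) + (1 - u) * Re (T2 M M)"

lemma Fq_nonneg: "0 < u \<Longrightarrow> u < 1 \<Longrightarrow> Fq u M \<ge> 0"
  unfolding Fq_def using T_pos[of M] T2_pos[of M] by simp

lemma bvec_inner: "bvec \<bullet> w = w $ Inl 1 + w $ Inr 2"
  by (simp add: inner_vec_def sum_UNIV_plus bvec_def if_distrib[where f="\<lambda>x. x * _"] cong: if_cong)

lemma sum3: "(\<Sum>a\<in>(UNIV::3 set). f a) = f 0 + f 1 + f 2"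
proof -
  have three: "(3::3) = 0" by simp
  have "(UNIV::3 set) = {0, 1, 2}" using exhaust_3 three by (metis UNIV_3 insert_commute)
  then have "(\<Sum>a\<in>(UNIV::3 set). f a) = (\<Sum>a\<in>{0,1,2}. f a)" by simp
  also have "\<dots> = f 0 + f 1 + f 2" by (simp add: ac_simps)
  finally show ?thesis .
qed

lemma WD:
  assumes u: "0 < u" "u < 1"
    and z0: "trace (A ** RR 0) = 0" and z1: "trace (A ** RR 1) = 1" and z2: "trace (A ** RR 2) = \<i>"
  shows "Fq u A \<ge> - (bvec \<bullet> w) + w \<bullet> (Qmat u \<rho> \<rho>1 \<rho>2 p e *v w)"
proof -
  define C where "C = Cm u w"
  define X where "X = of_real u * T A C + of_real (1 - u) * T2 C A"
  have 0: "Fq u (A - C) \<ge> 0" using Fq_nonneg[OF u] .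
  have exp: "Fq u (A - C) = Fq u A - 2 * Re X + Fq u C"
  proof -
    have h1: "Re (T C A) = Re (T A C)" by (subst T_herm) simp
    have h2: "Re (T2 A C) = Re (T2 C A)" by (subst T2_herm) simp
    show ?thesis
      unfolding Fq_def X_def using h1 h2
      by (simp add: T_diff_left T_diff_right T2_diff_left T2_diff_right algebra_simps)
  qed
  have cr: "X = - 1/2 * (\<Sum>a\<in>UNIV. cnj (cvec w a) * trace (A ** RR a))"
    unfolding C_def X_def by (rule CR[OF u])
  have s: "Re (\<Sum>a\<in>UNIV. cnj (cvec w a) * trace (A ** RR a)) = bvec \<bullet> w"
    by (simp add: sum3 z0 z1 z2 cvec_def bvec_inner)
  have re: "Re X = - 1/2 * (bvec \<bullet> w)"
    unfolding cr s[symmetric] by simp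
  have fc: "Fq u C = - (w \<bullet> (Qmat u \<rho> \<rho>1 \<rho>2 p e *v w))"
    by (simp add: Fq_def BL[OF u] C_def)
  show ?thesis using 0 exp re fc by linarith
qed

end


context hs begin

lemma HF:
  assumes h1: "cadj X1 = X1" and h2: "cadj X2 = X2"
  shows "holevo_fun \<rho> X1 X2 = max (Re (T (X1 + cscale \<i> X2) (X1 + cscale \<i> X2))) (Re (T2 (X1 + cscale \<i> X2) (X1 + cscale \<i> X2)))"
proof -
  have z: "trace (\<rho> ** Xa ** Xb) = T Xb Xa" if "cadj Xa = Xa" for Xa Xb
  proof -
    have "trace (\<rho> ** Xa ** Xb) = trace (Xb ** (\<rho> ** Xa))" by (rule trace_mul_sym)
    then show ?thesis unfolding T_def that by (simp add: matrix_mul_assoc)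
  qed
  have t2: "T2 Xa Xb = T Xa Xb" if "cadj Xa = Xa" "cadj Xb = Xb" for Xa Xb
    unfolding T_def T2_def using that by simp
  define t11 where "t11 = T X1 X1"
  define t12 where "t12 = T X1 X2"
  define t21 where "t21 = T X2 X1"
  define t22 where "t22 = T X2 X2"
  have c12: "t12 = cnj t21" unfolding t12_def t21_def by (rule T_herm)
  have c11: "Im t11 = 0" using arg_cong[OF T_herm[of X1 X1], of Im] unfolding t11_def by simp
  have c22: "Im t22 = 0" using arg_cong[OF T_herm[of X2 X2], of Im] unfolding t22_def by simp
  have TA: "T (X1 + cscale \<i> X2) (X1 + cscale \<i> X2) = t11 - \<i> * t12 + \<i> * t21 + t22"
    by (simp add: T_add_left T_add_right T_scale_left T_scale_right t11_def t12_def t21_def t22_def algebra_simps)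
  have T2A: "T2 (X1 + cscale \<i> X2) (X1 + cscale \<i> X2) = t11 + \<i> * t12 - \<i> * t21 + t22"
    by (simp add: T2_add_left T2_add_right T2_scale_left T2_scale_right t2 h1 h2 t11_def t12_def t21_def t22_def algebra_simps)
  have hf: "holevo_fun \<rho> X1 X2 = Re t11 + Re t22 + trace_norm_2x2 (Im t11) (Im t21) (Im t12) (Im t22)"
    by (simp add: holevo_fun_def Let_def z h1 h2 t11_def t12_def t21_def t22_def)
  have "Im t12 = - Im t21" using c12 by simp
  then have "holevo_fun \<rho> X1 X2 = Re t11 + Re t22 + 2 * \<bar>Im t21\<bar>"
    using hf c11 c22 trace_norm_special[of "Im t21"] by simp
  moreover have "Re (T (X1 + cscale \<i> X2) (X1 + cscale \<i> X2)) = Re t11 + Re t22 - 2 * Im t21"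
    unfolding TA using c12 by simp
  moreover have "Re (T2 (X1 + cscale \<i> X2) (X1 + cscale \<i> X2)) = Re t11 + Re t22 + 2 * Im t21"
    unfolding T2A using c12 by simp
  ultimately show ?thesis by (simp add: max_def abs_if)
qed

lemma feas_z:
  assumes "holevo_feasible \<rho> \<rho>1 \<rho>2 X1 X2"
  shows "trace ((X1 + cscale \<i> X2) ** RR 0) = 0" "trace ((X1 + cscale \<i> X2) ** RR 1) = 1"
    "trace ((X1 + cscale \<i> X2) ** RR 2) = \<i>"
proof -
  have e: "trace ((X1 + cscale \<i> X2) ** R) = trace (R ** X1) + \<i> * trace (R ** X2)" for R
    by (simp add: matrix_add_rdistrib' cscale_mult_left trace_add trace_cscale trace_mul_sym[of X1] trace_mul_sym[of X2])
  show "trace ((X1 + cscale \<i> X2) ** RR 0) = 0" "trace ((X1 + cscale \<i> X2) ** RR 1) = 1"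
    "trace ((X1 + cscale \<i> X2) ** RR 2) = \<i>"
    using assms by (simp_all add: e RR_def holevo_feasible_def)
qed

lemma cons_z:
  assumes u: "0 < u" "u < 1" and Qw: "Qmat u \<rho> \<rho>1 \<rho>2 p e *v w0 = (1/2) *\<^sub>R bvec"
  shows "trace (Cm u w0 ** RR a) = Complex (bvec $ Inl a) (bvec $ Inr a)"
proof -
  define A where "A = Cm u w0"
  have key: "Re (\<Sum>b\<in>UNIV. cnj (cvec v b) * trace (A ** RR b)) = v \<bullet> bvec" for v
  proof -
    have "v \<bullet> (Qmat u \<rho> \<rho>1 \<rho>2 p e *v w0) = - (u * Re (T (Cm u v) A) + (1 - u) * Re (T2 (Cm u v) A))"
      unfolding A_def by (rule BL[OF u])
    also have "\<dots> = - Re (of_real u * T A (Cm u v) + of_real (1 - u) * T2 (Cm u v) A)"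
      by (subst T_herm) simp
    also have "\<dots> = 1/2 * Re (\<Sum>b\<in>UNIV. cnj (cvec v b) * trace (A ** RR b))"
      by (subst CR[OF u]) simp
    finally show ?thesis using Qw by simp
  qed
  have ca: "cvec (axis (Inl a) 1) b = (if b = a then 1 else 0)" for b
    by (simp add: cvec_def axis_def)
  have cb: "cvec (axis (Inr a) 1) b = (if b = a then \<i> else 0)" for b
    by (simp add: cvec_def axis_def)
  have re: "Re (trace (A ** RR a)) = bvec $ Inl a"
    using key[of "axis (Inl a) 1"] unfolding ca inner_axis'
    by (simp add: if_distrib[where f="\<lambda>x. cnj x * _"] cong: if_cong)
  have im: "Im (trace (A ** RR a)) = bvec $ Inr a"
    using key[of "axis (Inr a) 1"] unfolding cb inner_axis'
    by (simp add: if_distrib[where f="\<lambda>x. cnj x * _"] cong: if_cong)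
  show ?thesis using re im unfolding A_def by (simp add: complex_eq_iff)
qed

lemma bvec_vals: "bvec $ Inl 0 = 0" "bvec $ Inr 0 = 0" "bvec $ Inl 1 = 1" "bvec $ Inr 1 = 0"
  "bvec $ Inl 2 = 0" "bvec $ Inr 2 = 1"
  by (simp_all add: bvec_def)

lemma mk_feas:
  assumes z0: "trace (A ** RR 0) = 0" and z1: "trace (A ** RR 1) = 1" and z2: "trace (A ** RR 2) = \<i>"
  defines "X1 \<equiv> cscale (1/2) (A + cadj A)" and "X2 \<equiv> cscale (- \<i>/2) (A - cadj A)"
  shows "holevo_feasible \<rho> \<rho>1 \<rho>2 X1 X2" "X1 + cscale \<i> X2 = A" "cadj X1 = X1" "cadj X2 = X2"
proof -
  have tr: "trace (R ** cadj A) = cnj (trace (A ** R))" if "cadj R = R" for R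
  proof -
    have "R ** cadj A = cadj (A ** R)" by (simp add: cadj_mult that)
    then show ?thesis by (simp add: trace_cadj)
  qed
  have t1: "trace (R ** X1) = 1/2 * (trace (A ** R) + cnj (trace (A ** R)))" if "cadj R = R" for R
    unfolding X1_def using tr[OF that]
    by (simp add: cscale_mult_right trace_cscale matrix_add_ldistrib trace_add trace_mul_sym[of R A])
  have t2: "trace (R ** X2) = - \<i>/2 * (trace (A ** R) - cnj (trace (A ** R)))" if "cadj R = R" for R
    unfolding X2_def using tr[OF that]
    by (simp add: cscale_mult_right trace_cscale matrix_diff_ldistrib trace_sub trace_mul_sym[of R A])
  have R0: "cadj \<rho> = \<rho>" "cadj \<rho>1 = \<rho>1" "cadj \<rho>2 = \<rho>2"
    using RR_herm[of 0] RR_herm[of 1] RR_herm[of 2] by (simp_all add: RR_def)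
  have zz: "trace (A ** \<rho>) = 0" "trace (A ** \<rho>1) = 1" "trace (A ** \<rho>2) = \<i>"
    using z0 z1 z2 by (simp_all add: RR_def)
  have H1: "cadj X1 = X1" by (simp add: X1_def cadj_cscale cadj_add add.commute)
  have H2: "cadj X2 = X2" by (simp add: X2_def cadj_def cscale_def vec_eq_iff algebra_simps)
  show "holevo_feasible \<rho> \<rho>1 \<rho>2 X1 X2"
    unfolding holevo_feasible_def hermitian_mat_def
    using t1[OF R0(1)] t1[OF R0(2)] t1[OF R0(3)] t2[OF R0(1)] t2[OF R0(2)] t2[OF R0(3)] zz H1 H2
    by simp
  show "X1 + cscale \<i> X2 = A"
    by (simp add: X1_def X2_def cscale_def vec_eq_iff field_simps)
  show "cadj X1 = X1" by (rule H1)
  show "cadj X2 = X2" by (rule H2)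
qed

end


lemma inv_props:
  fixes Q :: "real^'k^'k"
  assumes "invertible Q"
  shows "Q ** matrix_inv Q = mat 1" "matrix_inv Q ** Q = mat 1"
proof -
  have "\<exists>A'. Q ** A' = mat 1 \<and> A' ** Q = mat 1" using assms by (simp add: invertible_def)
  then have "Q ** matrix_inv Q = mat 1 \<and> matrix_inv Q ** Q = mat 1"
    unfolding matrix_inv_def by (rule someI_ex)
  then show "Q ** matrix_inv Q = mat 1" "matrix_inv Q ** Q = mat 1" by auto
qed

lemma sym_inv:
  fixes Q :: "real^'k^'k"
  assumes inv: "invertible Q" and sym: "\<forall>v w. v \<bullet> (Q *v w) = w \<bullet> (Q *v v)"
  shows "x v* matrix_inv Q = matrix_inv Q *v x"
proof -
  define y where "y = x v* matrix_inv Q"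
  have "v \<bullet> (Q *v y) = v \<bullet> x" for v
  proof -
    have "v \<bullet> (Q *v y) = y \<bullet> (Q *v v)" using sym by blast
    also have "\<dots> = x \<bullet> (matrix_inv Q *v (Q *v v))" unfolding y_def by (rule dot_lmul_matrix)
    also have "\<dots> = x \<bullet> v" by (simp add: matrix_vector_mul_assoc inv_props[OF inv])
    finally show ?thesis by (simp add: inner_commute)
  qed
  then have Qy: "Q *v y = x" using vector_eq_ldot by blast
  have "y = matrix_inv Q *v (Q *v y)" by (simp add: matrix_vector_mul_assoc inv_props[OF inv])
  then show ?thesis using Qy y_def by simp
qed

lemma cquad_re: "Re (cquad x M y) = x \<bullet> (ReM M *v y)"
  by (simp add: cquad_def inner_vec_def matrix_vector_mult_def ReM_def Re_sum sum_distrib_left algebra_simps)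

context hs begin

lemma Qsym:
  assumes u: "0 < u" "u < 1"
  shows "\<forall>v w. v \<bullet> (Qmat u \<rho> \<rho>1 \<rho>2 p e *v w) = w \<bullet> (Qmat u \<rho> \<rho>1 \<rho>2 p e *v v)"
proof (intro allI)
  fix v w
  have h1: "Re (T (Cm u w) (Cm u v)) = Re (T (Cm u v) (Cm u w))" by (subst T_herm) simp
  have h2: "Re (T2 (Cm u w) (Cm u v)) = Re (T2 (Cm u v) (Cm u w))" by (subst T2_herm) simp
  show "v \<bullet> (Qmat u \<rho> \<rho>1 \<rho>2 p e *v w) = w \<bullet> (Qmat u \<rho> \<rho>1 \<rho>2 p e *v v)"
    by (simp add: BL[OF u] h1 h2)
qed

lemma per_u_lower:
  assumes u: "0 < u" "u < 1" and inv: "invertible (Qmat u \<rho> \<rho>1 \<rho>2 p e)"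
    and feas: "holevo_feasible \<rho> \<rho>1 \<rho>2 X1 X2"
  shows "Lbound (Qmat u \<rho> \<rho>1 \<rho>2 p e) \<le> Fq u (X1 + cscale \<i> X2)"
proof -
  define Q where "Q = Qmat u \<rho> \<rho>1 \<rho>2 p e"
  define y where "y = matrix_inv Q *v bvec"
  define w0 where "w0 = (1/2) *\<^sub>R y"
  have Qy: "Q *v y = bvec" by (simp add: y_def matrix_vector_mul_assoc inv_props[OF inv[folded Q_def]])
  have Qw: "Q *v w0 = (1/2) *\<^sub>R bvec" by (simp add: w0_def matrix_vector_mult_scaleR Qy)
  have "- (bvec \<bullet> w0) + w0 \<bullet> (Q *v w0) \<le> Fq u (X1 + cscale \<i> X2)"
    unfolding Q_def by (rule WD[OF u feas_z[OF feas]])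
  moreover have "- (bvec \<bullet> w0) + w0 \<bullet> (Q *v w0) = Lbound Q"
    unfolding Qw by (simp add: w0_def Lbound_def y_def[symmetric] inner_commute)
  ultimately show ?thesis by (simp add: Q_def)
qed

lemma Fq_le_holevo:
  assumes u: "0 < u" "u < 1" and feas: "holevo_feasible \<rho> \<rho>1 \<rho>2 X1 X2"
  shows "Fq u (X1 + cscale \<i> X2) \<le> holevo_fun \<rho> X1 X2"
proof -
  have h: "cadj X1 = X1" "cadj X2 = X2" using feas by (simp_all add: holevo_feasible_def hermitian_mat_def)
  define a where "a = Re (T (X1 + cscale \<i> X2) (X1 + cscale \<i> X2))"
  define b where "b = Re (T2 (X1 + cscale \<i> X2) (X1 + cscale \<i> X2))"
  have "u * a + (1 - u) * b \<le> u * max a b + (1 - u) * max a b"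
    using u by (intro add_mono mult_left_mono) auto
  then show ?thesis using HF[OF h] by (simp add: Fq_def a_def b_def algebra_simps)
qed

lemma per_u_witness:
  assumes u: "0 < u" "u < 1" and inv: "invertible (Qmat u \<rho> \<rho>1 \<rho>2 p e)"
  shows "\<exists>X1 X2. holevo_feasible \<rho> \<rho>1 \<rho>2 X1 X2 \<and>
     holevo_fun \<rho> X1 X2 = Ubound (Qmat u \<rho> \<rho>1 \<rho>2 p e) (Q1 u \<rho> \<rho>1 \<rho>2 p e) (Q2 u \<rho> \<rho>1 \<rho>2 p e) \<and>
     holevo_fun \<rho> X1 X2 = max (Re (T (X1 + cscale \<i> X2) (X1 + cscale \<i> X2))) (Re (T2 (X1 + cscale \<i> X2) (X1 + cscale \<i> X2))) \<and>
     Fq u (X1 + cscale \<i> X2) = Lbound (Qmat u \<rho> \<rho>1 \<rho>2 p e)"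
proof -
  define Q where "Q = Qmat u \<rho> \<rho>1 \<rho>2 p e"
  define y where "y = matrix_inv Q *v bvec"
  define w0 where "w0 = (1/2) *\<^sub>R y"
  have Qy: "Q *v y = bvec" by (simp add: y_def matrix_vector_mul_assoc inv_props[OF inv[folded Q_def]])
  have Qw: "Q *v w0 = (1/2) *\<^sub>R bvec" by (simp add: w0_def matrix_vector_mult_scaleR Qy)
  define A where "A = Cm u w0"
  have z: "trace (A ** RR 0) = 0" "trace (A ** RR 1) = 1" "trace (A ** RR 2) = \<i>"
    using cons_z[OF u Qw[unfolded Q_def], of 0] cons_z[OF u Qw[unfolded Q_def], of 1]
      cons_z[OF u Qw[unfolded Q_def], of 2]
    by (simp_all add: A_def bvec_vals Complex_eq)
  define X1 where "X1 = cscale (1/2) (A + cadj A)"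
  define X2 where "X2 = cscale (- \<i>/2) (A - cadj A)"
  note mf = mk_feas[OF z, folded X1_def X2_def]
  have hf: "holevo_fun \<rho> X1 X2 = max (Re (T A A)) (Re (T2 A A))"
    using HF[OF mf(3) mf(4)] mf(2) by simp
  have byv: "bvec v* matrix_inv Q = y" using sym_inv[OF inv[folded Q_def] Qsym[OF u, folded Q_def]] y_def by simp
  have r1: "Re (cquad (bvec v* matrix_inv Q) (Q1 u \<rho> \<rho>1 \<rho>2 p e) (matrix_inv Q *v bvec)) = 4 * Re (T A A)"
    unfolding byv y_def[symmetric] cquad_re
    by (simp add: A_def B1[OF u, symmetric] w0_def matrix_vector_mult_scaleR)
  have r2: "Re (cquad (bvec v* matrix_inv Q) (Q2 u \<rho> \<rho>1 \<rho>2 p e) (matrix_inv Q *v bvec)) = 4 * Re (T2 A A)"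
    unfolding byv y_def[symmetric] cquad_re
    by (simp add: A_def B2[OF u, symmetric] w0_def matrix_vector_mult_scaleR)
  have U: "Ubound Q (Q1 u \<rho> \<rho>1 \<rho>2 p e) (Q2 u \<rho> \<rho>1 \<rho>2 p e) = max (Re (T A A)) (Re (T2 A A))"
    unfolding Ubound_def r1 r2 by (simp add: max_def)
  have L: "Fq u A = Lbound Q"
  proof -
    have "Fq u A = - (w0 \<bullet> (Q *v w0))" by (simp add: Fq_def A_def Q_def BL[OF u])
    also have "\<dots> = Lbound Q" unfolding Qw by (simp add: w0_def Lbound_def y_def[symmetric] inner_commute)
    finally show ?thesis .
  qed
  show ?thesis
    by (rule exI[of _ X1], rule exI[of _ X2]) (use mf hf U L in \<open>simp add: Q_def\<close>)
qed

end


theorem theorem3: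
  fixes \<rho> \<rho>1 \<rho>2 :: "complex^'n^'n"
    and p :: "'n::finite \<Rightarrow> real"
    and e :: "'n \<Rightarrow> complex^'n"
  assumes p_pos: "\<forall>j. p j > 0"
    and p_sum: "(\<Sum>j\<in>UNIV. p j) = 1"
    and e_orthonormal: "\<forall>j k. cinner (e j) (e k) = (if j = k then 1 else 0)"
    and spectral: "\<rho> = (\<chi> a b. \<Sum>j\<in>UNIV. complex_of_real (p j) * (e j $ a) * cnj (e j $ b))"
    and herm1: "hermitian_mat \<rho>1" and herm2: "hermitian_mat \<rho>2"
    and tr1: "trace \<rho>1 = 0" and tr2: "trace \<rho>2 = 0"
    and full_rank: "\<forall>u\<in>{0<..<1}. invertible (Qmat u \<rho> \<rho>1 \<rho>2 p e)"
  shows "(\<forall>u\<in>{0<..<1}. neg_definite (Qmat u \<rho> \<rho>1 \<rho>2 p e) \<longrightarrow>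
            Lbound (Qmat u \<rho> \<rho>1 \<rho>2 p e) \<le> HCRB \<rho> \<rho>1 \<rho>2 \<and>
            HCRB \<rho> \<rho>1 \<rho>2 \<le> Ubound (Qmat u \<rho> \<rho>1 \<rho>2 p e) (Q1 u \<rho> \<rho>1 \<rho>2 p e) (Q2 u \<rho> \<rho>1 \<rho>2 p e))
       \<and> (\<forall>u\<in>{0<..<1}. neg_definite (Qmat u \<rho> \<rho>1 \<rho>2 p e) \<and>
            ((\<lambda>v. bvec \<bullet> (matrix_inv (Qmat v \<rho> \<rho>1 \<rho>2 p e) *v bvec)) has_real_derivative 0) (at u) \<longrightarrow>
            Lbound (Qmat u \<rho> \<rho>1 \<rho>2 p e) = HCRB \<rho> \<rho>1 \<rho>2 \<and>
            HCRB \<rho> \<rho>1 \<rho>2 = Ubound (Qmat u \<rho> \<rho>1 \<rho>2 p e) (Q1 u \<rho> \<rho>1 \<rho>2 p e) (Q2 u \<rho> \<rho>1 \<rho>2 p e))"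
proof -
  interpret H: hs \<rho> \<rho>1 \<rho>2 p e
    using p_pos p_sum e_orthonormal spectral herm1 herm2 tr1 tr2 by unfold_locales auto
  define S where "S = {holevo_fun \<rho> X1 X2 | X1 X2. holevo_feasible \<rho> \<rho>1 \<rho>2 X1 X2}"
  have HC: "HCRB \<rho> \<rho>1 \<rho>2 = Inf S" by (simp add: HCRB_def S_def)
  have lbS: "\<forall>s\<in>S. Lbound (Qmat u \<rho> \<rho>1 \<rho>2 p e) \<le> s" if u: "0 < u" "u < 1" for u
  proof
    fix s assume "s \<in> S"
    then obtain X1 X2 where f: "holevo_feasible \<rho> \<rho>1 \<rho>2 X1 X2" and s: "s = holevo_fun \<rho> X1 X2"
      by (auto simp: S_def)
    have inv: "invertible (Qmat u \<rho> \<rho>1 \<rho>2 p e)" using full_rank u by auto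
    show "Lbound (Qmat u \<rho> \<rho>1 \<rho>2 p e) \<le> s"
      using H.per_u_lower[OF u inv f] H.Fq_le_holevo[OF u f] s by linarith
  qed
  have bounds: "Lbound (Qmat u \<rho> \<rho>1 \<rho>2 p e) \<le> HCRB \<rho> \<rho>1 \<rho>2 \<and>
      HCRB \<rho> \<rho>1 \<rho>2 \<le> Ubound (Qmat u \<rho> \<rho>1 \<rho>2 p e) (Q1 u \<rho> \<rho>1 \<rho>2 p e) (Q2 u \<rho> \<rho>1 \<rho>2 p e)"
    if u: "0 < u" "u < 1" for u
  proof -
    have inv: "invertible (Qmat u \<rho> \<rho>1 \<rho>2 p e)" using full_rank u by auto
    obtain X1 X2 where f: "holevo_feasible \<rho> \<rho>1 \<rho>2 X1 X2"
      and hU: "holevo_fun \<rho> X1 X2 = Ubound (Qmat u \<rho> \<rho>1 \<rho>2 p e) (Q1 u \<rho> \<rho>1 \<rho>2 p e) (Q2 u \<rho> \<rho>1 \<rho>2 p e)"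
      using H.per_u_witness[OF u inv] by blast
    have US: "Ubound (Qmat u \<rho> \<rho>1 \<rho>2 p e) (Q1 u \<rho> \<rho>1 \<rho>2 p e) (Q2 u \<rho> \<rho>1 \<rho>2 p e) \<in> S"
      unfolding S_def using f hU[symmetric] by (intro CollectI exI[of _ X1] exI[of _ X2]) simp
    have ne: "S \<noteq> {}" using US by blast
    have bdd: "bdd_below S" using lbS[OF u] by (auto simp: bdd_below_def)
    show ?thesis unfolding HC
      using cInf_greatest[OF ne] lbS[OF u] cInf_lower[OF US bdd] by blast
  qed
  show ?thesis
  proof (intro conjI ballI impI)
    fix u :: real assume "u \<in> {0<..<1}"
    then show "Lbound (Qmat u \<rho> \<rho>1 \<rho>2 p e) \<le> HCRB \<rho> \<rho>1 \<rho>2"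
      "HCRB \<rho> \<rho>1 \<rho>2 \<le> Ubound (Qmat u \<rho> \<rho>1 \<rho>2 p e) (Q1 u \<rho> \<rho>1 \<rho>2 p e) (Q2 u \<rho> \<rho>1 \<rho>2 p e)"
      using bounds by auto
  next
    fix u :: real assume uI: "u \<in> {0<..<1}"
      and hyp: "neg_definite (Qmat u \<rho> \<rho>1 \<rho>2 p e) \<and>
            ((\<lambda>v. bvec \<bullet> (matrix_inv (Qmat v \<rho> \<rho>1 \<rho>2 p e) *v bvec)) has_real_derivative 0) (at u)"
    have u: "0 < u" "u < 1" using uI by auto
    have D: "((\<lambda>v. bvec \<bullet> (matrix_inv (Qmat v \<rho> \<rho>1 \<rho>2 p e) *v bvec)) has_real_derivative 0) (at u)"
      using hyp by blast
    have inv: "invertible (Qmat u \<rho> \<rho>1 \<rho>2 p e)" using full_rank u by auto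
    obtain X1 X2 where f: "holevo_feasible \<rho> \<rho>1 \<rho>2 X1 X2"
      and hU: "holevo_fun \<rho> X1 X2 = Ubound (Qmat u \<rho> \<rho>1 \<rho>2 p e) (Q1 u \<rho> \<rho>1 \<rho>2 p e) (Q2 u \<rho> \<rho>1 \<rho>2 p e)"
      and hm: "holevo_fun \<rho> X1 X2 = max (Re (H.T (X1 + cscale \<i> X2) (X1 + cscale \<i> X2))) (Re (H.T2 (X1 + cscale \<i> X2) (X1 + cscale \<i> X2)))"
      and hL: "H.Fq u (X1 + cscale \<i> X2) = Lbound (Qmat u \<rho> \<rho>1 \<rho>2 p e)"
      using H.per_u_witness[OF u inv] by blast
    define f1 where "f1 = Re (H.T (X1 + cscale \<i> X2) (X1 + cscale \<i> X2))"
    define f2 where "f2 = Re (H.T2 (X1 + cscale \<i> X2) (X1 + cscale \<i> X2))"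
    define \<beta> where "\<beta> = (\<lambda>v. bvec \<bullet> (matrix_inv (Qmat v \<rho> \<rho>1 \<rho>2 p e) *v bvec))"
    define \<phi> where "\<phi> = (\<lambda>v. v * f1 + (1 - v) * f2 + 1/4 * \<beta> v)"
    have Fq: "H.Fq v (X1 + cscale \<i> X2) = v * f1 + (1 - v) * f2" for v
      by (simp add: H.Fq_def f1_def f2_def)
    have Lb: "Lbound (Qmat v \<rho> \<rho>1 \<rho>2 p e) = - (1/4) * \<beta> v" for v
      by (simp add: Lbound_def \<beta>_def)
    have phi_u: "\<phi> u = 0" using hL Fq[of u] Lb[of u] by (simp add: \<phi>_def)
    have phi_nn: "\<phi> v \<ge> 0" if "0 < v" "v < 1" for v
    proof -
      have invv: "invertible (Qmat v \<rho> \<rho>1 \<rho>2 p e)" using full_rank that by auto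
      show ?thesis using H.per_u_lower[OF that invv f] Fq[of v] Lb[of v] by (simp add: \<phi>_def)
    qed
    have dphi: "(\<phi> has_real_derivative (f1 - f2 + 1/4 * 0)) (at u)"
      unfolding \<phi>_def using D[folded \<beta>_def]
      by (auto intro!: derivative_eq_intros)
    have "f1 - f2 + 1/4 * 0 = 0"
    proof (rule DERIV_local_min[OF dphi])
      show "0 < min u (1 - u)" using u by simp
      show "\<forall>y. \<bar>u - y\<bar> < min u (1 - u) \<longrightarrow> \<phi> u \<le> \<phi> y"
      proof (intro allI impI)
        fix y assume "\<bar>u - y\<bar> < min u (1 - u)"
        then have "0 < y" "y < 1" by auto
        then show "\<phi> u \<le> \<phi> y" using phi_nn phi_u by simp
      qed
    qed
    then have eq: "f1 = f2" by simp
    have LU: "Lbound (Qmat u \<rho> \<rho>1 \<rho>2 p e) = Ubound (Qmat u \<rho> \<rho>1 \<rho>2 p e) (Q1 u \<rho> \<rho>1 \<rho>2 p e) (Q2 u \<rho> \<rho>1 \<rho>2 p e)"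
      using hU hm hL Fq[of u] eq by (simp add: f1_def f2_def algebra_simps)
    show "Lbound (Qmat u \<rho> \<rho>1 \<rho>2 p e) = HCRB \<rho> \<rho>1 \<rho>2"
      using bounds[OF u] LU by linarith
    show "HCRB \<rho> \<rho>1 \<rho>2 = Ubound (Qmat u \<rho> \<rho>1 \<rho>2 p e) (Q1 u \<rho> \<rho>1 \<rho>2 p e) (Q2 u \<rho> \<rho>1 \<rho>2 p e)"
      using bounds[OF u] LU by linarith
  qed
qed


end
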